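(* For a regular $T_1$-space $X$ the following are equivalent: (1) $X$ is metrizable; (2) $X$ has a base which is $\sigma$-discrete at non-isolated points; (3) $X$ has a base which is $\sigma$-locally finite at non-isolated points.
   Context: $I(X)$ is the set of isolated points. A family is locally finite (resp. discrete) at non-isolated points if each $x\in X\setminus I(X)$ has a neighborhood meeting at most finitely many (resp. at most one) of its members. A base $\mathcal{B}=\bigcup_{i\in\mathbb{N}}\mathcal{B}_i$ is $\sigma$-locally finite (resp. $\sigma$-discrete) at non-isolated points if each $\mathcal{B}_i$ is locally finite (resp. discrete) at non-isolated points. *)

theory Defs
  imports "HOL-Analysis.Analysis"
begin

definition isolated_points :: "'a topology \<Rightarrow> 'a set" where
  "isolated_points X = {x \<in> topspace X. openin X {x}}"

definition is_base :: "'a topology \<Rightarrow> 'a set set \<Rightarrow> bool" where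
  "is_base X \<B> \<longleftrightarrow> (\<forall>V \<in> \<B>. openin X V) \<and>
     (\<forall>U x. openin X U \<and> x \<in> U \<longrightarrow> (\<exists>V \<in> \<B>. x \<in> V \<and> V \<subseteq> U))"

definition locally_finite_at_nonisolated :: "'a topology \<Rightarrow> 'a set set \<Rightarrow> bool" where
  "locally_finite_at_nonisolated X \<F> \<longleftrightarrow>
     (\<forall>x \<in> topspace X - isolated_points X.
        \<exists>N. openin X N \<and> x \<in> N \<and> finite {U \<in> \<F>. U \<inter> N \<noteq> {}})"

definition discrete_at_nonisolated :: "'a topology \<Rightarrow> 'a set set \<Rightarrow> bool" where
  "discrete_at_nonisolated X \<F> \<longleftrightarrow>
     (\<forall>x \<in> topspace X - isolated_points X.
        \<exists>N. openin X N \<and> x \<in> N \<and>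
          (\<forall>U1 \<in> \<F>. \<forall>U2 \<in> \<F>. U1 \<inter> N \<noteq> {} \<and> U2 \<inter> N \<noteq> {} \<longrightarrow> U1 = U2))"

definition sigma_locally_finite_at_nonisolated :: "'a topology \<Rightarrow> 'a set set \<Rightarrow> bool" where
  "sigma_locally_finite_at_nonisolated X \<B> \<longleftrightarrow>
     (\<exists>\<B>s :: nat \<Rightarrow> 'a set set. \<B> = (\<Union>i. \<B>s i) \<and>
        (\<forall>i. locally_finite_at_nonisolated X (\<B>s i)))"

definition sigma_discrete_at_nonisolated :: "'a topology \<Rightarrow> 'a set set \<Rightarrow> bool" where
  "sigma_discrete_at_nonisolated X \<B> \<longleftrightarrow>
     (\<exists>\<B>s :: nat \<Rightarrow> 'a set set. \<B> = (\<Union>i. \<B>s i) \<and>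
        (\<forall>i. discrete_at_nonisolated X (\<B>s i)))"

end

theory Submission imports Defs begin

definition wo :: "'a rel" where "wo = (SOME r. Well_order r \<and> Field r = UNIV)"

lemma wo_props: "Well_order (wo::'a rel)" "Field (wo::'a rel) = UNIV"
  using someI_ex[OF well_ordering[where 'a='a]] unfolding wo_def by blast+

lemma wo_least:
  assumes "A \<noteq> {}"
  shows "\<exists>a\<in>A. \<forall>a'\<in>A. (a, a') \<in> wo"
proof -
  have "Linear_order (wo::'a rel)" "wf ((wo::'a rel) - Id)"
    using wo_props(1) unfolding well_order_on_def by blast+
  then have "\<forall>A \<subseteq> Field (wo::'a rel). A \<noteq> {} \<longrightarrow> (\<exists>a \<in> A. \<forall>a' \<in> A. (a, a') \<in> wo)"
    using Linear_order_wf_diff_Id[of "wo::'a rel"] by blast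
  then show ?thesis using assms unfolding wo_props(2) by blast
qed

lemma wo_iff: "((a::'a), b) \<in> wo \<longleftrightarrow> (b, a) \<notin> wo - Id"
proof -
  have "Linear_order (wo::'a rel)" using wo_props(1) unfolding well_order_on_def by blast
  then show ?thesis using Linear_order_in_diff_Id[of wo a b] by (simp add: wo_props(2))
qed

lemma wo_antisym: "((a::'a), b) \<in> wo \<Longrightarrow> (b, a) \<in> wo \<Longrightarrow> a = b"
  using wo_iff[of a b] by blast

lemma wo_total: "((a::'a), b) \<in> wo \<or> (b, a) \<in> wo"
  using wo_iff[of a b] by blast

context Metric_space
begin

definition first :: "real \<Rightarrow> 'a \<Rightarrow> 'a" where
  "first \<epsilon> x = (SOME s. s \<in> M \<and> x \<in> mball s \<epsilon> \<and> (\<forall>t. t \<in> M \<and> x \<in> mball t \<epsilon> \<longrightarrow> (s, t) \<in> wo))"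

lemma first:
  assumes "x \<in> M" "\<epsilon> > 0"
  shows "first \<epsilon> x \<in> M" "x \<in> mball (first \<epsilon> x) \<epsilon>"
    "\<And>t. t \<in> M \<Longrightarrow> x \<in> mball t \<epsilon> \<Longrightarrow> (first \<epsilon> x, t) \<in> wo"
proof -
  have "x \<in> {s. s \<in> M \<and> x \<in> mball s \<epsilon>}" using assms by simp
  then have "{s. s \<in> M \<and> x \<in> mball s \<epsilon>} \<noteq> {}" by blast
  then obtain s where "s \<in> {s. s \<in> M \<and> x \<in> mball s \<epsilon>}" "\<forall>t\<in>{s. s \<in> M \<and> x \<in> mball s \<epsilon>}. (s, t) \<in> wo"
    using wo_least[of "{s. s \<in> M \<and> x \<in> mball s \<epsilon>}"] by blast
  then have ex: "\<exists>s. s \<in> M \<and> x \<in> mball s \<epsilon> \<and> (\<forall>t. t \<in> M \<and> x \<in> mball t \<epsilon> \<longrightarrow> (s, t) \<in> wo)" by blast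
  show "first \<epsilon> x \<in> M" "x \<in> mball (first \<epsilon> x) \<epsilon>"
    "\<And>t. t \<in> M \<Longrightarrow> x \<in> mball t \<epsilon> \<Longrightarrow> (first \<epsilon> x, t) \<in> wo"
    using someI_ex[OF ex] unfolding first_def by blast+
qed

definition dlt :: "real \<Rightarrow> nat \<Rightarrow> real" where "dlt \<epsilon> n = \<epsilon> * (1/2)^n / 3"

definition Eg :: "real \<Rightarrow> 'a set \<Rightarrow> nat \<Rightarrow> 'a \<Rightarrow> 'a set" where
  "Eg \<epsilon> G n s = \<Union>{mball x (dlt \<epsilon> n) | x. x \<in> M \<and> first \<epsilon> x = s \<and> x \<notin> G \<and> mball x (3 * dlt \<epsilon> n) \<subseteq> mball s \<epsilon>}"

primrec Gs :: "real \<Rightarrow> nat \<Rightarrow> 'a set" where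
  "Gs \<epsilon> 0 = {}"
| "Gs \<epsilon> (Suc n) = Gs \<epsilon> n \<union> \<Union>((\<lambda>s. Eg \<epsilon> (Gs \<epsilon> n) n s) ` M)"

definition E :: "real \<Rightarrow> nat \<Rightarrow> 'a \<Rightarrow> 'a set" where "E \<epsilon> n s = Eg \<epsilon> (Gs \<epsilon> n) n s"

lemma Gs_E: "x \<in> Gs \<epsilon> n \<Longrightarrow> \<exists>j s. s \<in> M \<and> x \<in> E \<epsilon> j s"
  by (induction n) (auto simp: E_def)

lemma E_open: "openin mtopology (E \<epsilon> n s)"
  unfolding E_def Eg_def by (intro openin_Union) auto

lemma E_sub: "E \<epsilon> n s \<subseteq> mball s \<epsilon>"
proof
  fix y assume "y \<in> E \<epsilon> n s"
  then obtain x where x: "x \<in> M" "mball x (3 * dlt \<epsilon> n) \<subseteq> mball s \<epsilon>" "y \<in> mball x (dlt \<epsilon> n)"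
    unfolding E_def Eg_def by blast
  have "d x y < dlt \<epsilon> n" using x(3) by simp
  then have "dlt \<epsilon> n \<le> 3 * dlt \<epsilon> n" using nonneg[of x y] by linarith
  then have "y \<in> mball x (3 * dlt \<epsilon> n)" using x(3) by auto
  then show "y \<in> mball s \<epsilon>" using x(2) by blast
qed

lemma E_cover:
  assumes "x \<in> M" "\<epsilon> > 0"
  shows "\<exists>n s. s \<in> M \<and> x \<in> E \<epsilon> n s"
proof -
  let ?s = "first \<epsilon> x"
  have s: "?s \<in> M" "x \<in> mball ?s \<epsilon>" using first[OF assms] by auto
  then have "d ?s x < \<epsilon>" by simp
  then obtain n where n: "(1/2::real)^n < (\<epsilon> - d ?s x) / \<epsilon>"
    using real_arch_pow_inv[of "(\<epsilon> - d ?s x) / \<epsilon>" "1/2"] assms(2) by auto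
  have "3 * dlt \<epsilon> n < \<epsilon> - d ?s x"
    using n assms(2) by (simp add: dlt_def field_simps)
  then have sub: "mball x (3 * dlt \<epsilon> n) \<subseteq> mball ?s \<epsilon>"
    using s triangle[of ?s x] by (auto simp: subset_iff) (smt (verit, best) triangle)
  show ?thesis
  proof (cases "x \<in> Gs \<epsilon> n")
    case True then show ?thesis using Gs_E by blast
  next
    case False
    have "dlt \<epsilon> n > 0" using assms(2) by (simp add: dlt_def)
    then have "x \<in> mball x (dlt \<epsilon> n)" using assms(1) by simp
    then have "x \<in> E \<epsilon> n ?s" using False sub assms(1) unfolding E_def Eg_def by blast
    then show ?thesis using s(1) by blast
  qed
qed

lemma E_sep_aux:
  assumes "\<epsilon> > 0" "s \<in> M" "t \<in> M" "s \<noteq> t" "(s, t) \<in> wo"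
    "y \<in> E \<epsilon> n s" "z \<in> E \<epsilon> n t"
  shows "d y z \<ge> dlt \<epsilon> n"
proof -
  obtain a where a: "a \<in> M" "first \<epsilon> a = s" "mball a (3 * dlt \<epsilon> n) \<subseteq> mball s \<epsilon>" "y \<in> mball a (dlt \<epsilon> n)"
    using assms(6) unfolding E_def Eg_def by blast
  obtain b where b0: "b \<in> M" "first \<epsilon> b = t" "z \<in> mball b (dlt \<epsilon> n)"
    using assms(7) unfolding E_def Eg_def by blast
  have yM: "y \<in> M" using a(4) by simp
  note b = b0(1,2) yM b0(3)
  have "b \<notin> mball s \<epsilon>"
  proof
    assume "b \<in> mball s \<epsilon>"
    then have "(t, s) \<in> wo" using first(3)[OF b(1) assms(1) assms(2)] b(2) by simp
    then show False using wo_antisym[of s t] assms(4,5) by blast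
  qed
  then have "b \<notin> mball a (3 * dlt \<epsilon> n)" using a(3) by blast
  then have "d a b \<ge> 3 * dlt \<epsilon> n" using a(1) b(1) by auto
  moreover have "d a y < dlt \<epsilon> n" "d b z < dlt \<epsilon> n" "z \<in> M" using a(4) b(4) by auto
  moreover have "d a b \<le> d a y + d y z + d z b"
    using triangle[of a y b] triangle[of y z b] a(1) b(1,3) \<open>z \<in> M\<close> by linarith
  ultimately show ?thesis using commute[of z b] by linarith
qed

lemma E_sep:
  assumes "\<epsilon> > 0" "s \<in> M" "t \<in> M" "s \<noteq> t" "y \<in> E \<epsilon> n s" "z \<in> E \<epsilon> n t"
  shows "d y z \<ge> dlt \<epsilon> n"
  using wo_total[of s t] E_sep_aux[OF assms(1,2,3,4) _ assms(5,6)]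
    E_sep_aux[OF assms(1,3,2) _ _ assms(6,5)] assms(4) commute[of y z] by auto

lemma E_discrete:
  assumes "\<epsilon> > 0" "x \<in> M"
  shows "\<exists>N. openin mtopology N \<and> x \<in> N \<and>
    (\<forall>U1 \<in> (\<lambda>s. E \<epsilon> n s) ` M. \<forall>U2 \<in> (\<lambda>s. E \<epsilon> n s) ` M. U1 \<inter> N \<noteq> {} \<and> U2 \<inter> N \<noteq> {} \<longrightarrow> U1 = U2)"
proof (intro exI conjI ballI impI)
  have pos: "dlt \<epsilon> n > 0" using assms(1) by (simp add: dlt_def)
  show "openin mtopology (mball x (dlt \<epsilon> n / 2))" by simp
  show "x \<in> mball x (dlt \<epsilon> n / 2)" using pos assms(2) by simp
  fix U1 U2 assume U: "U1 \<in> (\<lambda>s. E \<epsilon> n s) ` M" "U2 \<in> (\<lambda>s. E \<epsilon> n s) ` M"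
    and I: "U1 \<inter> mball x (dlt \<epsilon> n / 2) \<noteq> {} \<and> U2 \<inter> mball x (dlt \<epsilon> n / 2) \<noteq> {}"
  obtain s t where st: "s \<in> M" "t \<in> M" "U1 = E \<epsilon> n s" "U2 = E \<epsilon> n t" using U by blast
  obtain y z where yz: "y \<in> U1" "z \<in> U2" "y \<in> mball x (dlt \<epsilon> n / 2)" "z \<in> mball x (dlt \<epsilon> n / 2)"
    using I by blast
  have "d y z \<le> d y x + d x z" using yz(3,4) triangle[of y x z] by auto
  also have "\<dots> < dlt \<epsilon> n" using yz(3,4) commute[of x y] by auto
  finally have "d y z < dlt \<epsilon> n" .
  then have nle: "\<not> dlt \<epsilon> n \<le> d y z" by linarith
  have "y \<in> E \<epsilon> n s" "z \<in> E \<epsilon> n t" using yz(1,2) st(3,4) by auto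
  then have "s = t" using E_sep[OF assms(1) st(1,2), where y=y and z=z and n=n] nle by blast
  then show "U1 = U2" using st by simp
qed

lemma sigma_discrete_base:
  "\<exists>Bs :: nat \<Rightarrow> 'a set set. is_base mtopology (\<Union>i. Bs i) \<and>
     (\<forall>i. \<forall>x \<in> M. \<exists>N. openin mtopology N \<and> x \<in> N \<and>
          (\<forall>U1 \<in> Bs i. \<forall>U2 \<in> Bs i. U1 \<inter> N \<noteq> {} \<and> U2 \<inter> N \<noteq> {} \<longrightarrow> U1 = U2))"
proof -
  define Bs where "Bs k = (\<lambda>s. E (1 / real (Suc (fst (prod_decode k)))) (snd (prod_decode k)) s) ` M" for k
  have disc: "\<forall>x \<in> M. \<exists>N. openin mtopology N \<and> x \<in> N \<and>
          (\<forall>U1 \<in> Bs i. \<forall>U2 \<in> Bs i. U1 \<inter> N \<noteq> {} \<and> U2 \<inter> N \<noteq> {} \<longrightarrow> U1 = U2)" for i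
    unfolding Bs_def by (intro ballI E_discrete) auto
  have "is_base mtopology (\<Union>i. Bs i)"
    unfolding is_base_def
  proof (intro conjI allI impI ballI)
    fix V assume "V \<in> (\<Union>i. Bs i)"
    then show "openin mtopology V" unfolding Bs_def using E_open by blast
  next
    fix W x assume Wx: "openin mtopology W \<and> x \<in> W"
    then obtain r where r: "r > 0" "mball x r \<subseteq> W" and xM: "x \<in> M"
      unfolding openin_mtopology by blast
    obtain j where j: "1 / real (Suc j) < r / 2"
      using reals_Archimedean[of "r/2"] r(1) by (auto simp: inverse_eq_divide)
    define \<epsilon> where "\<epsilon> = 1 / real (Suc j)"
    have eps: "\<epsilon> > 0" by (simp add: \<epsilon>_def)
    obtain n s where ns: "s \<in> M" "x \<in> E \<epsilon> n s" using E_cover[OF xM eps] by blast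
    have "E \<epsilon> n s \<in> Bs (prod_encode (j, n))" unfolding Bs_def \<epsilon>_def using ns(1) by simp
    moreover have "E \<epsilon> n s \<subseteq> W"
    proof
      fix y assume y: "y \<in> E \<epsilon> n s"
      have "x \<in> mball s \<epsilon>" "y \<in> mball s \<epsilon>" using E_sub ns(2) y by blast+
      then have "d x y < r" using triangle[of x s y] commute[of x s] j unfolding \<epsilon>_def by auto
      then have "y \<in> mball x r" using xM \<open>y \<in> mball s \<epsilon>\<close> by simp
      then show "y \<in> W" using r(2) by blast
    qed
    ultimately show "\<exists>V \<in> (\<Union>i. Bs i). x \<in> V \<and> V \<subseteq> W" using ns(2) by blast
  qed
  then show ?thesis using disc by blast
qed

end


lemma lf_subset:
  assumes "locally_finite_at_nonisolated X F" "G \<subseteq> F"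
  shows "locally_finite_at_nonisolated X G"
  unfolding locally_finite_at_nonisolated_def
proof
  fix x assume "x \<in> topspace X - isolated_points X"
  then obtain N where N: "openin X N" "x \<in> N" "finite {U\<in>F. U \<inter> N \<noteq> {}}"
    using assms(1) unfolding locally_finite_at_nonisolated_def by blast
  have "{U\<in>G. U \<inter> N \<noteq> {}} \<subseteq> {U\<in>F. U \<inter> N \<noteq> {}}" using assms(2) by blast
  then show "\<exists>N. openin X N \<and> x \<in> N \<and> finite {U\<in>G. U \<inter> N \<noteq> {}}"
    using N finite_subset by blast
qed

lemma lf_closure:
  assumes "locally_finite_at_nonisolated X F"
  shows "X closure_of (\<Union>F) \<subseteq> \<Union>((\<lambda>V. X closure_of V) ` F)"
proof
  fix p assume p: "p \<in> X closure_of \<Union>F"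
  then have pt: "p \<in> topspace X" using in_closure_of by fast
  show "p \<in> \<Union>((\<lambda>V. X closure_of V) ` F)"
  proof (cases "p \<in> isolated_points X")
    case True
    then have "openin X {p}" by (simp add: isolated_points_def)
    with p obtain y where "y \<in> {p}" "y \<in> \<Union>F" by (metis in_closure_of insertI1)
    then obtain V where V: "V\<in>F" "p\<in>V" by auto
    then have "p \<in> X closure_of V" using pt by (meson in_closure_of)
    thus ?thesis using V by blast
  next
    case False
    then obtain N where N: "openin X N" "p \<in> N" "finite {U\<in>F. U \<inter> N \<noteq> {}}"
      using assms pt unfolding locally_finite_at_nonisolated_def by blast
    let ?G = "{U\<in>F. U \<inter> N \<noteq> {}}"
    have "p \<in> N \<inter> X closure_of \<Union>F" using p N by blast
    also have "\<dots> \<subseteq> X closure_of (N \<inter> \<Union>F)" by (rule openin_Int_closure_of_subset[OF N(1)])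
    also have "\<dots> \<subseteq> X closure_of (\<Union>?G)" by (intro closure_of_mono) auto
    also have "\<dots> = \<Union>((\<lambda>V. X closure_of V) ` ?G)" using N(3) by (simp add: closure_of_Union)
    also have "\<dots> \<subseteq> \<Union>((\<lambda>V. X closure_of V) ` F)" by auto
    finally show ?thesis .
  qed
qed

lemma regular_closure_nbhd:
  assumes "regular_space X" "openin X W" "x \<in> W"
  obtains U where "openin X U" "x \<in> U" "X closure_of U \<subseteq> W"
proof -
  have "closedin X (topspace X - W)" using assms(2) by blast
  moreover have "x \<in> topspace X - (topspace X - W)" using assms openin_subset by fastforce
  ultimately obtain U where U: "openin X U" "x \<in> U" "disjnt (topspace X - W) (X closure_of U)"
    using assms(1) unfolding regular_space by blast
  have "X closure_of U \<subseteq> W" using U(3) closure_of_subset_topspace by (fastforce simp: disjnt_iff)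
  with U show ?thesis using that by blast
qed


lemma sigma_lf_cover:
  fixes Bs :: "nat \<Rightarrow> 'a set set"
  assumes reg: "regular_space X" and B: "is_base X (\<Union>i. Bs i)"
    and lf: "\<And>i. locally_finite_at_nonisolated X (Bs i)"
    and S: "closedin X S" and T: "closedin X T" and ST: "disjnt S T"
  shows "\<exists>h::nat \<Rightarrow> 'a set. (\<forall>n. openin X (h n)) \<and> (\<forall>n. disjnt T (X closure_of (h n))) \<and> S \<subseteq> \<Union>(range h)"
proof -
  define h where "h n = \<Union>{V\<in>Bs n. disjnt T (X closure_of V)}" for n
  have opB: "openin X V" if "V \<in> Bs i" for V i using B that unfolding is_base_def by blast
  have "openin X (h n)" for n unfolding h_def by (intro openin_Union) (auto intro: opB)
  moreover have "disjnt T (X closure_of (h n))" for n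
  proof -
    have "X closure_of (h n) \<subseteq> \<Union>((\<lambda>V. X closure_of V) ` {V\<in>Bs n. disjnt T (X closure_of V)})"
      unfolding h_def by (rule lf_closure, rule lf_subset[OF lf]) auto
    then show ?thesis by (fastforce simp: disjnt_iff)
  qed
  moreover have "S \<subseteq> \<Union>(range h)"
  proof
    fix x assume x: "x \<in> S"
    have o: "openin X (topspace X - T)" using T by (simp add: closedin_def)
    have "x \<in> topspace X" using x S closedin_subset by blast
    moreover have "x \<notin> T" using x ST unfolding disjnt_def by blast
    ultimately have xt: "x \<in> topspace X - T" by blast
    obtain U where U: "openin X U" "x \<in> U" "X closure_of U \<subseteq> topspace X - T"
      using regular_closure_nbhd[OF reg o xt] by blast
    have "\<exists>V \<in> (\<Union>i. Bs i). x \<in> V \<and> V \<subseteq> U" using B U(1,2) unfolding is_base_def by blast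
    then obtain V i where V: "V \<in> Bs i" "x \<in> V" "V \<subseteq> U" by blast
    have "X closure_of V \<subseteq> topspace X - T" using closure_of_mono[OF V(3)] U(3) by blast
    then have "disjnt T (X closure_of V)" unfolding disjnt_def by blast
    then have "V \<in> {V\<in>Bs i. disjnt T (X closure_of V)}" using V(1) by blast
    then have "x \<in> h i" unfolding h_def using V(2) by blast
    then show "x \<in> \<Union>(range h)" by blast
  qed
  ultimately show ?thesis by (intro exI[of _ h]) blast
qed

lemma sigma_lf_normal:
  fixes Bs :: "nat \<Rightarrow> 'a set set"
  assumes reg: "regular_space X" and B: "is_base X (\<Union>i. Bs i)"
    and lf: "\<And>i. locally_finite_at_nonisolated X (Bs i)"
  shows "normal_space X"
  unfolding normal_space_def
proof clarify
  fix S T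
  assume clo: "closedin X S" "closedin X T" and "disjnt S T"
  show "\<exists>U V. openin X U \<and> openin X V \<and> S \<subseteq> U \<and> T \<subseteq> V \<and> disjnt U V"
  proof -
    obtain h :: "nat \<Rightarrow> 'a set" where 
      opeh: "\<And>n. openin X (h n)" and dish: "\<And>n. disjnt T (X closure_of (h n))"
      and Sh: "S \<subseteq> \<Union>(range h)"
      using sigma_lf_cover[OF reg B lf clo \<open>disjnt S T\<close>] by blast
    obtain k :: "nat \<Rightarrow> 'a set" where 
      opek: "\<And>n. openin X (k n)" and disk: "\<And>n. disjnt S (X closure_of (k n))"
      and Tk: "T \<subseteq> \<Union>(range k)"
      using sigma_lf_cover[OF reg B lf clo(2,1)] \<open>disjnt S T\<close> disjnt_sym by blast
    define U where "U \<equiv> \<Union>i. h i - (\<Union>j<i. X closure_of k j)"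
    define V where "V \<equiv> \<Union>i. k i - (\<Union>j\<le>i. X closure_of h j)"
    show ?thesis
    proof (intro exI conjI)
      show "openin X U" "openin X V"
        unfolding U_def V_def
        by (force intro!: opek opeh closedin_Union closedin_closure_of)+
      show "S \<subseteq> U" "T \<subseteq> V"
        using Sh Tk dish disk by (fastforce simp: U_def V_def disjnt_iff)+
      have "\<And>x i j. \<lbrakk>x \<in> k i; x \<in> h j; \<forall>j\<le>i. x \<notin> X closure_of h j\<rbrakk>
                 \<Longrightarrow> \<exists>i<j. x \<in> X closure_of k i"
        by (metis in_closure_of linorder_not_less opek openin_subset subsetD)
      then show "disjnt U V"
        by (force simp: U_def V_def disjnt_iff)
    qed
  qed
qed

lemma half_pow_sum: "(\<Sum>k<K. (1/2::real)^(Suc k)) = 1 - (1/2)^K"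
  by (induction K) (auto simp: field_simps)

lemma min_abs_tri: "min 1 \<bar>a - c\<bar> \<le> min 1 \<bar>a - b\<bar> + min 1 \<bar>b - (c::real)\<bar>"
  by (smt (verit))

lemma sigma_lf_metrizable:
  fixes Bs :: "nat \<Rightarrow> 'a set set"
  assumes reg: "regular_space X" and t1: "t1_space X" and B: "is_base X (\<Union>i. Bs i)"
    and lf: "\<And>i. locally_finite_at_nonisolated X (Bs i)"
  shows "metrizable_space X"
proof -
  have nor: "normal_space X" by (rule sigma_lf_normal[OF reg B lf])
  have opB: "openin X V" if "V \<in> Bs i" for V i using B that unfolding is_base_def by blast
  define C where "C m U = \<Union>{V\<in>Bs m. X closure_of V \<subseteq> U}" for m U
  have Ccl: "X closure_of (C m U) \<subseteq> U" for m U
  proof -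
    have "X closure_of (C m U) \<subseteq> \<Union>((\<lambda>V. X closure_of V) ` {V\<in>Bs m. X closure_of V \<subseteq> U})"
      unfolding C_def by (rule lf_closure, rule lf_subset[OF lf]) auto
    then show ?thesis by blast
  qed
  define P where "P m U g \<longleftrightarrow> continuous_map X euclideanreal g \<and> (\<forall>x\<in>topspace X. 0 \<le> g x \<and> g x \<le> 1)
      \<and> (\<forall>x\<in>topspace X - U. g x = 0) \<and> (\<forall>x \<in> X closure_of (C m U). g x = 1)" for m U and g :: "'a \<Rightarrow> real"
  have exP: "\<exists>g. P m U g" if "U \<in> Bs n" for n m U
  proof -
    have c1: "closedin X (topspace X - U)" by (intro closedin_diff closedin_topspace opB[OF that])
    have c2: "closedin X (X closure_of (C m U))" by simp
    have dj: "disjnt (topspace X - U) (X closure_of (C m U))" using Ccl[of m U] by (auto simp: disjnt_iff)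
    obtain g where g: "continuous_map X (top_of_set {0..1::real}) g" "g ` (topspace X - U) \<subseteq> {0}"
        "g ` (X closure_of (C m U)) \<subseteq> {1}"
      by (rule Urysohn_lemma[OF nor c1 c2 dj, of 0 1]) simp
    have "continuous_map X euclideanreal g" "g \<in> topspace X \<rightarrow> {0..1}"
      using g(1) by (simp_all add: continuous_map_in_subtopology)
    then have "P m U g" unfolding P_def using g(2,3) by (auto simp: Pi_iff)
    then show ?thesis by blast
  qed
  define f where "f m U = (SOME g. P m U g)" for m U
  have fP: "P m U (f m U)" if "U \<in> Bs n" for n m U unfolding f_def using exP[OF that] by (rule someI_ex)
  have fcont: "continuous_map X euclideanreal (f m U)" if "U \<in> Bs n" for n m U
    using fP[OF that, of m] by (simp add: P_def)
  have f0: "f m U x = 0" if "U \<in> Bs n" "x \<in> topspace X" "x \<notin> U" for n m U x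
    using fP[OF that(1), of m] that by (simp add: P_def)
  have f1: "f m U x = 1" if "U \<in> Bs n" "V \<in> Bs m" "X closure_of V \<subseteq> U" "x \<in> V" for n m U V x
  proof -
    have xt: "x \<in> topspace X" using openin_subset[OF opB[OF that(2)]] that(4) by blast
    have "V \<in> {V\<in>Bs m. X closure_of V \<subseteq> U}" using that(2,3) by simp
    then have "x \<in> C m U" unfolding C_def using that(4) by (rule UnionI)
    then have "x \<in> X closure_of (C m U)" using closure_of_subset_Int[of X "C m U"] xt by blast
    then show ?thesis using fP[OF that(1), of m] by (simp add: P_def)
  qed
  define e where "e n m x y = Sup ((\<lambda>U. min 1 \<bar>f m U x - f m U y\<bar>) ` Bs n \<union> {0})" for n m x y
  have bdd: "bdd_above ((\<lambda>U. min 1 \<bar>f m U x - f m U y\<bar>) ` Bs n \<union> {0})" for n m x y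
    by (rule bdd_aboveI[of _ 1]) auto
  have e_ge: "min 1 \<bar>f m U x - f m U y\<bar> \<le> e n m x y" if "U \<in> Bs n" for n m U x y
    unfolding e_def by (rule cSup_upper[OF _ bdd]) (use that in blast)
  have e_nn: "0 \<le> e n m x y" for n m x y
    unfolding e_def by (rule cSup_upper[OF _ bdd]) blast
  have e_le: "e n m x y \<le> c" if "0 \<le> c" "\<And>U. U \<in> Bs n \<Longrightarrow> min 1 \<bar>f m U x - f m U y\<bar> \<le> c" for n m x y c
    unfolding e_def by (rule cSup_least) (use that in auto)
  have e_le1: "e n m x y \<le> 1" for n m x y by (rule e_le) auto
  have e_sym: "e n m x y = e n m y x" for n m x y by (simp add: e_def abs_minus_commute)
  have e_refl: "e n m x x = 0" for n m x using e_le[of 0 n m x x] e_nn[of n m x x] by simp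
  have e_tri: "e n m x z \<le> e n m x y + e n m y z" for n m x y z
  proof (rule e_le)
    show "0 \<le> e n m x y + e n m y z" using e_nn by (simp add: add_nonneg_nonneg)
    fix U assume U: "U \<in> Bs n"
    show "min 1 \<bar>f m U x - f m U z\<bar> \<le> e n m x y + e n m y z"
      using min_abs_tri[of "f m U x" "f m U z" "f m U y"] e_ge[OF U, of m x y] e_ge[OF U, of m y z] by linarith
  qed
  define dk where "dk k = e (fst (prod_decode k)) (snd (prod_decode k))" for k
  have dk_nn: "0 \<le> dk k x y" and dk_le1: "dk k x y \<le> 1" for k x y by (simp_all add: dk_def e_nn e_le1)
  define D where "D x y = (\<Sum>k. (1/2::real)^(Suc k) * dk k x y)" for x y
  have summ: "summable (\<lambda>k. (1/2::real)^(Suc k) * dk k x y)" for x y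
  proof (rule summable_comparison_test'[where g="\<lambda>k. (1/2::real)^k" and N=0])
    show "summable (\<lambda>k. (1/2::real)^k)" by (rule summable_geometric) simp
    fix k :: nat
    have "(1/2::real)^(Suc k) * dk k x y \<le> (1/2)^(Suc k) * 1"
      by (rule mult_left_mono) (simp_all add: dk_le1)
    also have "\<dots> \<le> (1/2)^k" by simp
    finally show "norm ((1/2::real)^(Suc k) * dk k x y) \<le> (1/2)^k" using dk_nn[of k x y] by simp
  qed
  have term_le: "(1/2::real)^(Suc k) * dk k x y \<le> D x y" for k x y
  proof -
    have "(\<Sum>j\<in>{k}. (1/2::real)^(Suc j) * dk j x y) \<le> D x y"
      unfolding D_def by (rule sum_le_suminf[OF summ]) (auto simp: dk_nn)
    then show ?thesis by simp
  qed
  have D_nn: "0 \<le> D x y" for x y unfolding D_def by (rule suminf_nonneg[OF summ]) (intro mult_nonneg_nonneg zero_le_power dk_nn, simp)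
  have sep: "\<exists>k. \<forall>y\<in>topspace X. dk k x y < 1 \<longrightarrow> y \<in> W" if W: "openin X W" "x \<in> W" for x W
  proof -
    have "\<exists>V \<in> (\<Union>i. Bs i). x \<in> V \<and> V \<subseteq> W" using B W unfolding is_base_def by blast
    then obtain U n where U: "U \<in> Bs n" "x\<in>U" "U\<subseteq>W" by blast
    obtain W' where W': "openin X W'" "x\<in>W'" "X closure_of W' \<subseteq> U"
      using regular_closure_nbhd[OF reg opB[OF U(1)] U(2)] by blast
    have "\<exists>V \<in> (\<Union>i. Bs i). x \<in> V \<and> V \<subseteq> W'" using B W'(1,2) unfolding is_base_def by blast
    then obtain V m where V: "V\<in>Bs m" "x\<in>V" "V\<subseteq>W'" by blast
    have clV: "X closure_of V \<subseteq> U" using closure_of_mono[OF V(3)] W'(3) by blast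
    have fx: "f m U x = 1" using f1[OF U(1) V(1) clV V(2)] .
    show ?thesis
    proof (intro exI[of _ "prod_encode (n,m)"] ballI impI)
      fix y assume y: "y\<in>topspace X" "dk (prod_encode (n,m)) x y < 1"
      show "y \<in> W"
      proof (rule ccontr)
        assume "y\<notin>W" then have "y\<notin>U" using U by blast
        then have "f m U y = 0" using f0[OF U(1) y(1)] by blast
        then have "1 \<le> e n m x y" using e_ge[OF U(1), of m x y] fx by simp
        with y(2) show False by (simp add: dk_def)
      qed
    qed
  qed
  have near_e: "\<exists>N. openin X N \<and> x \<in> N \<and> (\<forall>y\<in>N. e n m x y \<le> \<epsilon>)"
    if x: "x \<in> topspace X" and eps: "\<epsilon> > 0" for x n m \<epsilon>
  proof (cases "x \<in> isolated_points X")
    case True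
    then have "openin X {x}" by (simp add: isolated_points_def)
    then show ?thesis using e_refl eps by (intro exI[of _ "{x}"]) auto
  next
    case False
    then obtain N0 where N0: "openin X N0" "x \<in> N0" "finite {U\<in>Bs n. U \<inter> N0 \<noteq> {}}"
      using lf[of n] x unfolding locally_finite_at_nonisolated_def by blast
    define G where "G = {U\<in>Bs n. U \<inter> N0 \<noteq> {}}"
    define N where "N = N0 \<inter> ((\<Inter>U\<in>G. {y \<in> topspace X. f m U y \<in> ball (f m U x) \<epsilon>}) \<inter> topspace X)"
    have "openin X ((\<Inter>U\<in>G. {y \<in> topspace X. f m U y \<in> ball (f m U x) \<epsilon>}) \<inter> topspace X)"
    proof (rule openin_INT)
      show "finite G" using N0(3) by (simp add: G_def)
      fix U assume "U \<in> G"
      then have "U \<in> Bs n" by (simp add: G_def)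
      then show "openin X {y \<in> topspace X. f m U y \<in> ball (f m U x) \<epsilon>}"
        by (intro openin_continuous_map_preimage[OF fcont]) auto
    qed
    then have oN: "openin X N" unfolding N_def using N0(1) by blast
    have xN: "x \<in> N" unfolding N_def using N0(2) x eps by auto
    have "e n m x y \<le> \<epsilon>" if y: "y \<in> N" for y
    proof (rule e_le)
      show "0 \<le> \<epsilon>" using eps by simp
      fix U assume U: "U \<in> Bs n"
      show "min 1 \<bar>f m U x - f m U y\<bar> \<le> \<epsilon>"
      proof (cases "U \<in> G")
        case True
        then have "f m U y \<in> ball (f m U x) \<epsilon>" using y unfolding N_def by blast
        then have "\<bar>f m U x - f m U y\<bar> < \<epsilon>" by (simp add: dist_real_def)
        then show ?thesis by linarith
      next
        case False
        then have "U \<inter> N0 = {}" using U by (simp add: G_def)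
        moreover have "y \<in> N0" "y \<in> topspace X" using y unfolding N_def by auto
        ultimately have "f m U x = 0" "f m U y = 0" using f0[OF U] x N0(2) by blast+
        then show ?thesis using eps by simp
      qed
    qed
    then show ?thesis using oN xN by blast
  qed
  have near: "\<exists>N. openin X N \<and> x \<in> N \<and> (\<forall>y\<in>N. D x y < \<epsilon>)"
    if x: "x \<in> topspace X" and eps: "\<epsilon> > 0" for x \<epsilon>
  proof -
    obtain K where K: "(1/2::real)^K < \<epsilon>/2" using real_arch_pow_inv[of "\<epsilon>/2" "1/2"] eps by auto
    have "\<forall>k. \<exists>N. openin X N \<and> x \<in> N \<and> (\<forall>y\<in>N. dk k x y \<le> \<epsilon>/2)"
      unfolding dk_def by (rule allI, rule near_e[OF x half_gt_zero[OF eps]])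
    then obtain Nf where Nf: "\<And>k. openin X (Nf k)" "\<And>k. x \<in> Nf k" "\<And>k y. y \<in> Nf k \<Longrightarrow> dk k x y \<le> \<epsilon>/2"
      by metis
    define N where "N = (\<Inter>k\<in>{..<K}. Nf k) \<inter> topspace X"
    have oN: "openin X N" unfolding N_def by (rule openin_INT) (auto simp: Nf)
    have xN: "x \<in> N" unfolding N_def using Nf(2) x by blast
    have "D x y < \<epsilon>" if y: "y \<in> N" for y
    proof -
      let ?t = "\<lambda>k. (1/2::real)^(Suc k) * dk k x y"
      have "D x y = (\<Sum>n. ?t (n + K)) + (\<Sum>k<K. ?t k)"
        unfolding D_def by (rule suminf_split_initial_segment[OF summ])
      moreover have "(\<Sum>k<K. ?t k) \<le> (\<Sum>k<K. (1/2::real)^(Suc k) * (\<epsilon>/2))"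
      proof (rule sum_mono)
        fix k assume "k \<in> {..<K}"
        then have "dk k x y \<le> \<epsilon>/2" using y Nf(3) unfolding N_def by blast
        then show "?t k \<le> (1/2::real)^(Suc k) * (\<epsilon>/2)" by (rule mult_left_mono) simp
      qed
      moreover have "(\<Sum>k<K. (1/2::real)^(Suc k) * (\<epsilon>/2)) \<le> \<epsilon>/2"
      proof -
        have "(\<Sum>k<K. (1/2::real)^(Suc k) * (\<epsilon>/2)) = (\<Sum>k<K. (1/2::real)^(Suc k)) * (\<epsilon>/2)"
          by (rule sum_distrib_right[symmetric])
        also have "\<dots> = (1 - (1/2)^K) * (\<epsilon>/2)" by (simp only: half_pow_sum)
        also have "\<dots> \<le> \<epsilon>/2" using eps by (simp add: mult_le_cancel_right1)
        finally show ?thesis .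
      qed
      moreover have "(\<Sum>n. ?t (n + K)) \<le> (\<Sum>n. (1/2::real)^(Suc K) * (1/2)^n)"
      proof (rule suminf_le)
        fix n
        have "?t (n + K) \<le> (1/2::real)^(Suc (n + K)) * 1" by (rule mult_left_mono) (simp_all add: dk_le1)
        also have "\<dots> = (1/2::real)^(Suc K) * (1/2)^n" by (simp add: power_add)
        finally show "?t (n + K) \<le> (1/2::real)^(Suc K) * (1/2)^n" .
        show "summable (\<lambda>n. ?t (n + K))" using summ[of x y] summable_iff_shift[of ?t K] by (simp only:)
        show "summable (\<lambda>n. (1/2::real)^(Suc K) * (1/2)^n)"
          by (rule summable_mult, rule summable_geometric) simp
      qed
      moreover have "(\<Sum>n. (1/2::real)^(Suc K) * (1/2)^n) = (1/2)^K"
        by (subst suminf_mult) (auto intro: summable_geometric simp: suminf_geometric)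
      ultimately show ?thesis using K by linarith
    qed
    then show ?thesis using oN xN by blast
  qed
  have M: "Metric_space (topspace X) D"
  proof
    show "0 \<le> D x y" for x y by (rule D_nn)
    show "D x y = D y x" for x y unfolding D_def dk_def using e_sym by simp
    show "D x y = 0 \<longleftrightarrow> x = y" if "x \<in> topspace X" "y \<in> topspace X" for x y
    proof
      assume "x = y" then show "D x y = 0" unfolding D_def dk_def by (simp add: e_refl)
    next
      assume D0: "D x y = 0"
      show "x = y"
      proof (rule ccontr)
        assume "x \<noteq> y"
        have "\<exists>W. openin X W \<and> x \<in> W \<and> y \<notin> W"
          using t1 that \<open>x \<noteq> y\<close> unfolding t1_space_def by blast
        then obtain W where W: "openin X W" "x \<in> W" "y \<notin> W" by blast
        obtain k where k: "\<forall>z\<in>topspace X. dk k x z < 1 \<longrightarrow> z \<in> W" using sep[OF W(1,2)] by blast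
        have "\<not> dk k x y < 1" using k that(2) W(3) by blast
        then have "1 \<le> dk k x y" by simp
        then have "(1/2::real)^(Suc k) * 1 \<le> (1/2)^(Suc k) * dk k x y" by (rule mult_left_mono) simp
        moreover have "(0::real) < (1/2)^(Suc k) * 1" by simp
        ultimately have "0 < D x y" using term_le[of k x y] by linarith
        with D0 show False by simp
      qed
    qed
    show "D x z \<le> D x y + D y z" if "x \<in> topspace X" "y \<in> topspace X" "z \<in> topspace X" for x y z
    proof -
      have "D x y + D y z = (\<Sum>k. (1/2::real)^(Suc k) * dk k x y + (1/2)^(Suc k) * dk k y z)"
        unfolding D_def by (rule suminf_add[OF summ summ])
      moreover have "D x z \<le> (\<Sum>k. (1/2::real)^(Suc k) * dk k x y + (1/2)^(Suc k) * dk k y z)"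
        unfolding D_def
      proof (rule suminf_le[OF _ summ summable_add[OF summ summ]])
        fix k
        have "dk k x z \<le> dk k x y + dk k y z" unfolding dk_def by (rule e_tri)
        then have "(1/2::real)^(Suc k) * dk k x z \<le> (1/2)^(Suc k) * (dk k x y + dk k y z)"
          by (rule mult_left_mono) simp
        then show "(1/2::real)^(Suc k) * dk k x z \<le> (1/2)^(Suc k) * dk k x y + (1/2)^(Suc k) * dk k y z"
          by (simp add: distrib_left)
      qed
      ultimately show ?thesis by simp
    qed
  qed
  interpret Mx: Metric_space "topspace X" D by (rule M)
  have "X = Mx.mtopology"
    unfolding topology_eq
  proof (intro allI iffI)
    fix S assume S: "openin X S"
    show "openin Mx.mtopology S" unfolding Mx.openin_mtopology
    proof (intro conjI allI impI)
      show "S \<subseteq> topspace X" using openin_subset S by blast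
      fix x assume xS: "x\<in>S"
      obtain k where k: "\<forall>y\<in>topspace X. dk k x y < 1 \<longrightarrow> y \<in> S" using sep[OF S xS] by blast
      show "\<exists>r>0. Mx.mball x ((r::real)) \<subseteq> S"
      proof (intro exI[of _ "(1/2::real)^(Suc k)"] conjI)
        show "(0::real) < (1/2)^Suc k" by simp
        show "Mx.mball x ((1/2)^Suc k) \<subseteq> S"
        proof
          fix y assume "y \<in> Mx.mball x ((1/2)^Suc k)"
          then have y: "y\<in>topspace X" "D x y < (1/2)^Suc k" by simp_all
          have "(1/2::real)^Suc k * dk k x y < (1/2)^Suc k * 1" using term_le[of k x y] y(2) by linarith
          then have "dk k x y < 1" by (simp add: mult_less_cancel_left_pos)
          then show "y \<in> S" using k y by blast
        qed
      qed
    qed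
  next
    fix S assume S: "openin Mx.mtopology S"
    show "openin X S" unfolding openin_subopen[of X S]
    proof
      fix x assume "x\<in>S"
      then obtain r where r: "r>0" "Mx.mball x r \<subseteq> S" and xt: "x \<in> topspace X"
        using S unfolding Mx.openin_mtopology by blast
      obtain N where N: "openin X N" "x\<in>N" "\<forall>y\<in>N. D x y < r" using near[OF xt r(1)] by blast
      have "N \<subseteq> S"
      proof
        fix y assume "y \<in> N"
        then have "y \<in> topspace X" using N(1) openin_subset by blast
        then have "y \<in> Mx.mball x r" using N \<open>y\<in>N\<close> xt by simp
        then show "y \<in> S" using r by blast
      qed
      then show "\<exists>T. openin X T \<and> x \<in> T \<and> T \<subseteq> S" using N by blast
    qed
  qed
  then show ?thesis using Mx.metrizable_space_mtopology by simp
qed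

lemma at_most_one_finite:
  assumes "\<And>a b. a \<in> S \<Longrightarrow> b \<in> S \<Longrightarrow> a = b"
  shows "finite S"
proof (cases "S = {}")
  case False
  then obtain a where "a \<in> S" by blast
  then have "S \<subseteq> {a}" using assms by blast
  then show ?thesis using finite_subset by blast
qed simp

lemma discrete_imp_lf:
  assumes "discrete_at_nonisolated X F"
  shows "locally_finite_at_nonisolated X F"
  unfolding locally_finite_at_nonisolated_def
proof
  fix x assume x: "x \<in> topspace X - isolated_points X"
  have "\<exists>N. openin X N \<and> x \<in> N \<and> (\<forall>U1 \<in> F. \<forall>U2 \<in> F. U1 \<inter> N \<noteq> {} \<and> U2 \<inter> N \<noteq> {} \<longrightarrow> U1 = U2)"
    using assms x unfolding discrete_at_nonisolated_def by (rule bspec)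
  then obtain N where N: "openin X N" "x \<in> N"
    "\<forall>U1 \<in> F. \<forall>U2 \<in> F. U1 \<inter> N \<noteq> {} \<and> U2 \<inter> N \<noteq> {} \<longrightarrow> U1 = U2"
    by (elim exE conjE) simp
  have "finite {U\<in>F. U \<inter> N \<noteq> {}}"
  proof (rule at_most_one_finite)
    fix a b assume "a \<in> {U\<in>F. U \<inter> N \<noteq> {}}" "b \<in> {U\<in>F. U \<inter> N \<noteq> {}}"
    then show "a = b" using N(3) by simp
  qed
  then show "\<exists>N. openin X N \<and> x \<in> N \<and> finite {U\<in>F. U \<inter> N \<noteq> {}}" using N(1,2) by blast
qed
lemma metrizable_imp_sigma_discrete:
  assumes "metrizable_space X"
  shows "\<exists>\<B>. is_base X \<B> \<and> sigma_discrete_at_nonisolated X \<B>"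
proof -
  obtain M d where Md: "Metric_space M d" "X = Metric_space.mtopology M d"
    using assms unfolding metrizable_space_def by blast
  obtain Bs :: "nat \<Rightarrow> 'a set set" where Bs: "is_base X (\<Union>i. Bs i)"
    "\<And>i. \<forall>x \<in> M. \<exists>N. openin X N \<and> x \<in> N \<and>
          (\<forall>U1 \<in> Bs i. \<forall>U2 \<in> Bs i. U1 \<inter> N \<noteq> {} \<and> U2 \<inter> N \<noteq> {} \<longrightarrow> U1 = U2)"
    using Metric_space.sigma_discrete_base[OF Md(1)] Md(2) by blast
  have tM: "topspace X = M" using Md by (simp add: Metric_space.topspace_mtopology)
  have "discrete_at_nonisolated X (Bs i)" for i
    unfolding discrete_at_nonisolated_def using Bs(2)[of i] tM by blast
  then have "sigma_discrete_at_nonisolated X (\<Union>i. Bs i)"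
    unfolding sigma_discrete_at_nonisolated_def by blast
  then show ?thesis using Bs(1) by blast
qed

lemma sigma_discrete_imp_lf:
  "sigma_discrete_at_nonisolated X \<B> \<Longrightarrow> sigma_locally_finite_at_nonisolated X \<B>"
  unfolding sigma_discrete_at_nonisolated_def sigma_locally_finite_at_nonisolated_def
  using discrete_imp_lf by blast

lemma sigma_lf_imp_metrizable:
  assumes "regular_space X" "t1_space X" "is_base X \<B>" "sigma_locally_finite_at_nonisolated X \<B>"
  shows "metrizable_space X"
proof -
  obtain Bs :: "nat \<Rightarrow> 'a set set" where Bs: "\<B> = (\<Union>i. Bs i)" "\<And>i. locally_finite_at_nonisolated X (Bs i)"
    using assms(4) unfolding sigma_locally_finite_at_nonisolated_def by blast
  show ?thesis by (rule sigma_lf_metrizable[OF assms(1,2) _ Bs(2)]) (use assms(3) Bs(1) in simp)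
qed

theorem mainTheorem10:
  fixes X :: "'a topology"
  assumes "regular_space X" and "t1_space X"
  shows "(metrizable_space X \<longleftrightarrow>
            (\<exists>\<B>. is_base X \<B> \<and> sigma_discrete_at_nonisolated X \<B>)) \<and>
         (metrizable_space X \<longleftrightarrow>
            (\<exists>\<B>. is_base X \<B> \<and> sigma_locally_finite_at_nonisolated X \<B>))"
proof -
  have a: "metrizable_space X \<Longrightarrow> \<exists>\<B>. is_base X \<B> \<and> sigma_discrete_at_nonisolated X \<B>"
    by (rule metrizable_imp_sigma_discrete)
  have b: "\<exists>\<B>. is_base X \<B> \<and> sigma_locally_finite_at_nonisolated X \<B> \<Longrightarrow> metrizable_space X"
    using sigma_lf_imp_metrizable[OF assms] by blast
  have c: "\<exists>\<B>. is_base X \<B> \<and> sigma_discrete_at_nonisolated X \<B> \<Longrightarrow>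
           \<exists>\<B>. is_base X \<B> \<and> sigma_locally_finite_at_nonisolated X \<B>"
    using sigma_discrete_imp_lf by blast
  show ?thesis using a b c by blast
qed

end
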